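(* Let $K$ be an odd prime and $p,m\in\mathbb Z$ with $m\ge0$. Then $$\sum{}'_{\alpha}\check q^{\,p\alpha^2}\alpha^{2m}=x^{\max(0,\frac{K-1}2-m)}\,w\quad\text{for some }w\in\mathbb Z[\check q].$$
   Context: $\check q=e^{2\pi i/K}$, $x=\check q-1$. $\sum'_\alpha$ denotes the sum over odd integers $\alpha$ with $-K\le\alpha\le K$, where the two terms $\alpha=\pm K$ are each weighted by $\frac12$. *)

theory Defs
  imports Complex_Main "HOL-Computational_Algebra.Primes"
begin

definition qchk :: "nat \<Rightarrow> complex" where
  "qchk K = exp (2 * of_real pi * \<i> / of_nat K)"

definition primed_weight :: "nat \<Rightarrow> int \<Rightarrow> complex" where
  "primed_weight K \<alpha> = (if \<bar>\<alpha>\<bar> = int K then 1/2 else 1)"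

definition primed_sum :: "nat \<Rightarrow> (int \<Rightarrow> complex) \<Rightarrow> complex" where
  "primed_sum K f = (\<Sum>\<alpha>\<in>{\<alpha>\<in>{-int K..int K}. odd \<alpha>}. primed_weight K \<alpha> * f \<alpha>)"

definition in_Zq :: "complex \<Rightarrow> complex \<Rightarrow> bool" where
  "in_Zq q w = (\<exists>(c::nat \<Rightarrow> int) N. w = (\<Sum>i<N. of_int (c i) * q ^ i))"

end

theory Submission
  imports Defs "HOL-Computational_Algebra.Polynomial"
begin

lemma in_Zq_of_int_mono: "in_Zq q (of_int c * q ^ i)"
  unfolding in_Zq_def
  by (rule exI[of _ "\<lambda>k. if k = i then c else 0"], rule exI[of _ "Suc i"])
     (simp add: if_distrib sum.delta cong: if_cong)

lemma in_Zq_zero: "in_Zq q 0"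
  unfolding in_Zq_def by (rule exI[of _ "\<lambda>_. 0"], rule exI[of _ 0]) simp

lemma pad_sum: "(\<Sum>i<N. of_int (c i) * q ^ i) = (\<Sum>i<N+M. of_int (if i < N then c i else 0) * (q::complex) ^ i)"
proof -
  have "(\<Sum>i<N+M. of_int (if i < N then c i else 0) * q ^ i) = (\<Sum>i\<in>{..<N+M} \<inter> {i. i<N}. of_int (c i) * q ^ i)"
    by (simp add: sum.inter_restrict) (rule sum.cong, auto)
  also have "{..<N+M} \<inter> {i. i<N} = {..<N}" by auto
  finally show ?thesis by simp
qed

lemma in_Zq_add: "in_Zq q a \<Longrightarrow> in_Zq q b \<Longrightarrow> in_Zq q (a + b)"
proof -
  assume "in_Zq q a" "in_Zq q b"
  then obtain c N d M where a: "a = (\<Sum>i<N. of_int (c i) * q ^ i)" and b: "b = (\<Sum>i<M. of_int (d i) * q ^ i)"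
    unfolding in_Zq_def by blast
  have "a = (\<Sum>i<N+M. of_int (if i < N then c i else 0) * q ^ i)" using a pad_sum by blast
  moreover have "b = (\<Sum>i<M+N. of_int (if i < M then d i else 0) * q ^ i)" using b pad_sum by blast
  ultimately have "a + b = (\<Sum>i<N+M. of_int ((if i < N then c i else 0) + (if i < M then d i else 0)) * q ^ i)"
    by (simp add: add.commute[of M N] sum.distrib[symmetric] distrib_right)
  then show ?thesis unfolding in_Zq_def by (intro exI)
qed

lemma in_Zq_sum: "(\<And>i. i \<in> A \<Longrightarrow> in_Zq q (f i)) \<Longrightarrow> in_Zq q (\<Sum>i\<in>A. f i)"
proof (induction A rule: infinite_finite_induct)
  case (infinite A) then show ?case by (simp add: in_Zq_zero)
next
  case empty then show ?case by (simp add: in_Zq_zero)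
next
  case (insert x F) then show ?case by (simp add: in_Zq_add)
qed

lemma in_Zq_mult: "in_Zq q a \<Longrightarrow> in_Zq q b \<Longrightarrow> in_Zq q (a * b)"
proof -
  assume "in_Zq q a" "in_Zq q b"
  then obtain c N d M where a: "a = (\<Sum>i<N. of_int (c i) * q ^ i)" and b: "b = (\<Sum>i<M. of_int (d i) * q ^ i)"
    unfolding in_Zq_def by blast
  have "a * b = (\<Sum>i<N. \<Sum>j<M. of_int (c i * d j) * q ^ (i + j))"
    unfolding a b sum_distrib_right sum_distrib_left by (subst sum.swap) (simp add: power_add mult_ac)
  also have "in_Zq q \<dots>" by (intro in_Zq_sum in_Zq_of_int_mono)
  finally show ?thesis .
qed

lemma in_Zq_of_int: "in_Zq q (of_int c)"
  using in_Zq_of_int_mono[of q c 0] by simp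

lemma in_Zq_of_nat: "in_Zq q (of_nat c)"
  using in_Zq_of_int[of q "int c"] by simp

lemma in_Zq_q: "in_Zq q q"
  using in_Zq_of_int_mono[of q 1 1] by simp

lemma in_Zq_uminus: "in_Zq q a \<Longrightarrow> in_Zq q (- a)"
  using in_Zq_mult[OF in_Zq_of_int[of q "-1"]] by simp

lemma in_Zq_diff: "in_Zq q a \<Longrightarrow> in_Zq q b \<Longrightarrow> in_Zq q (a - b)"
  using in_Zq_add[OF _ in_Zq_uminus] by simp

lemma in_Zq_power: "in_Zq q a \<Longrightarrow> in_Zq q (a ^ n)"
  by (induction n) (auto intro: in_Zq_mult simp: in_Zq_of_int_mono[of q 1 0, simplified])

lemma in_Zq_x: "in_Zq q (q - 1)"
  using in_Zq_diff[OF in_Zq_q in_Zq_of_int[of q 1]] by simp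

lemma qchk_pow: "K > 0 \<Longrightarrow> qchk K ^ K = 1"
proof -
  assume "K > 0"
  have "qchk K ^ K = exp (of_nat K * (2 * of_real pi * \<i> / of_nat K))"
    unfolding qchk_def by (rule exp_of_nat_mult[symmetric])
  also have "\<dots> = exp (2 * of_real pi * \<i>)" using \<open>K > 0\<close> by simp
  finally show ?thesis by simp
qed

lemma qchk_ne1: "K > 2 \<Longrightarrow> qchk K \<noteq> 1"
proof -
  assume K: "K > 2"
  have "Im (qchk K) = sin (2 * pi / K)" unfolding qchk_def Im_exp
    by (simp add: Im_divide power2_eq_square)
  moreover have "sin (2 * pi / K) > 0"
  proof (rule sin_gt_zero)
    show "0 < 2 * pi / K" using K by simp
    have "2 * pi / K < 2 * pi / 2" using K by (intro divide_strict_left_mono) auto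
    then show "2 * pi / K < pi" by simp
  qed
  ultimately show ?thesis by auto
qed

lemma qchk_ne0: "qchk K \<noteq> 0" unfolding qchk_def by simp

lemma psum: assumes "prime (K::nat)" shows "i < K - 1 \<Longrightarrow> int K dvd (\<Sum>j<K. (int j)^i)"
proof (induction i rule: less_induct)
  case (less i)
  define S where "S l = (\<Sum>j<K. (int j)^l)" for l
  have tel: "(\<Sum>j<K. (int (Suc j))^(Suc i) - (int j)^(Suc i)) = int K ^ Suc i"
    by (subst sum_lessThan_telescope[where f = "\<lambda>j. (int j)^(Suc i)"]) simp
  have each: "(int (Suc j))^(Suc i) - (int j)^(Suc i) = (\<Sum>l\<le>i. int (Suc i choose l) * int j ^ l)" for j
  proof -
    have "(int j + 1)^(Suc i) = (\<Sum>l\<le>Suc i. of_nat (Suc i choose l) * int j ^ l * 1 ^ (Suc i - l))"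
      by (rule binomial_ring)
    then have "(int j + 1)^(Suc i) = (\<Sum>l\<le>i. int (Suc i choose l) * int j ^ l) + int j ^ Suc i"
      by (simp add: atMost_Suc)
    then show ?thesis by (metis add_diff_cancel_right' of_nat_Suc add.commute)
  qed
  have "(\<Sum>l\<le>i. int (Suc i choose l) * S l) = int K ^ Suc i"
    unfolding S_def sum_distrib_left using tel each
    by (subst sum.swap) (simp add: mult_ac)
  then have eq: "(\<Sum>l<i. int (Suc i choose l) * S l) + int (Suc i) * S i = int K ^ Suc i"
    by (simp add: lessThan_Suc_atMost[symmetric])
  have "int K dvd (\<Sum>l<i. int (Suc i choose l) * S l)"
    using less by (intro dvd_sum dvd_mult) (auto simp: S_def)
  moreover have "int K dvd int K ^ Suc i" by simp
  ultimately have "int K dvd int (Suc i) * S i" using eq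
    by (metis dvd_add_right_iff)
  moreover have "prime (int K)" using assms by simp
  moreover have "\<not> int K dvd int (Suc i)"
    using less.prems by (auto dest!: zdvd_imp_le)
  ultimately show ?case unfolding S_def using prime_dvd_mult_iff by blast
qed

lemma polysum: assumes "prime (K::nat)" "degree P < K - 1"
  shows "int K dvd (\<Sum>j<K. poly P (int j))"
proof -
  have "(\<Sum>j<K. poly P (int j)) = (\<Sum>i\<le>degree P. coeff P i * (\<Sum>j<K. (int j)^i))"
    unfolding poly_altdef sum_distrib_left by (subst sum.swap) simp
  also have "int K dvd \<dots>"
    using assms psum by (auto intro!: dvd_sum[where A="{..degree P}"] dvd_mult[where b="coeff P _"])
  finally show ?thesis .
qed

lemma fact_choose_int: "fact k * int (N choose k) = (\<Prod>i<k. int N - int i)"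
proof -
  have "(fact k :: real) * real (N choose k) = (\<Prod>i=0..<k. real N - of_nat i)"
    using gbinomial_mult_fact[of k "real N"] by (simp add: binomial_gbinomial)
  then have "real_of_int (fact k * int (N choose k)) = real_of_int (\<Prod>i<k. int N - int i)"
    by (simp add: atLeast0LessThan)
  then show ?thesis by (simp only: of_int_eq_iff)
qed

lemma powi_mod: fixes q :: complex assumes "q ^ K = 1" "K > 0"
  shows "q powi z = q ^ nat (z mod int K)"
proof -
  have q0: "q \<noteq> 0" using assms by (cases K) auto
  have "z = int K * (z div int K) + z mod int K" by simp
  then have "q powi z = q powi (int K * (z div int K)) * q powi (z mod int K)"
    by (metis power_int_add q0)
  also have "q powi (int K * (z div int K)) = 1"
    by (simp add: power_int_mult assms)
  also have "q powi (z mod int K) = q ^ nat (z mod int K)"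
    using assms by (metis power_int_of_nat pos_mod_sign of_nat_0_less_iff int_nat_eq)
  finally show ?thesis by simp
qed

lemma powi_cong: fixes q :: complex assumes "q ^ K = 1" "K > 0" "z \<ge> 0" "z mod int K = z' mod int K"
  shows "q powi z' = q ^ nat z"
proof -
  have "q powi z' = q powi z" using powi_mod[OF assms(1,2)] assms(4) by metis
  also have "\<dots> = q ^ nat z" using assms(3) by (metis power_int_of_nat int_nat_eq)
  finally show ?thesis .
qed

lemma binom_trunc: "\<exists>w. in_Zq q w \<and> q ^ N = (\<Sum>k<n. of_nat (N choose k) * (q - 1)^k) + (q - 1)^n * w"
proof -
  define x where "x = q - 1"
  have "q ^ N = (x + 1) ^ N" by (simp add: x_def)
  also have "\<dots> = (\<Sum>k\<le>N. of_nat (N choose k) * x^k)" by (subst binomial_ring) simp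
  also have "\<dots> = (\<Sum>k<n + Suc N. of_nat (N choose k) * x^k)"
    by (rule sum.mono_neutral_left) auto
  also have "\<dots> = (\<Sum>k<n. of_nat (N choose k) * x^k) + (\<Sum>k=n..<n + Suc N. of_nat (N choose k) * x^k)"
    using sum.atLeastLessThan_concat[of 0 n "n + Suc N" "\<lambda>k. of_nat (N choose k) * x^k"]
    by (simp add: lessThan_atLeast0)
  also have "(\<Sum>k=n..<n + Suc N. of_nat (N choose k) * x^k) = x^n * (\<Sum>k<Suc N. of_nat (N choose (k+n)) * x^k)"
  proof -
    have "(\<Sum>k=n..<n + Suc N. of_nat (N choose k) * x^k) = (\<Sum>k=0..<Suc N. of_nat (N choose (k+n)) * x^(k+n))"
      using sum.shift_bounds_nat_ivl[of "\<lambda>k. of_nat (N choose k) * x^k" 0 n "Suc N"] by (simp add: add.commute)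
    also have "\<dots> = x^n * (\<Sum>k<Suc N. of_nat (N choose (k+n)) * x^k)"
      unfolding sum_distrib_left lessThan_atLeast0 by (rule sum.cong) (simp_all add: power_add mult_ac)
    finally show ?thesis .
  qed
  finally have "q ^ N = (\<Sum>k<n. of_nat (N choose k) * x^k) + x^n * (\<Sum>k<Suc N. of_nat (N choose (k+n)) * x^k)" .
  moreover have "in_Zq q (\<Sum>k<Suc N. of_nat (N choose (k+n)) * x^k)"
    unfolding x_def by (intro in_Zq_sum in_Zq_mult in_Zq_of_nat in_Zq_power in_Zq_x)
  ultimately show ?thesis unfolding x_def by blast
qed

lemma Kdiv: assumes "prime K" "K > 2"
  shows "\<exists>w. in_Zq (qchk K) w \<and> of_nat K = (qchk K - 1)^(K-1) * w"
proof -
  define q where "q = qchk K"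
  define x where "x = q - 1"
  have x0: "x \<noteq> 0" using qchk_ne1[OF assms(2)] by (simp add: x_def q_def)
  have "(x + 1)^K = 1" using qchk_pow[of K] assms by (simp add: x_def q_def)
  then have "(\<Sum>k<Suc K. of_nat (K choose k) * x^k) = 1"
    by (simp add: binomial_ring lessThan_Suc_atMost)
  then have "(\<Sum>k<K. of_nat (K choose Suc k) * x^Suc k) = 0"
    by (simp only: sum.lessThan_Suc_shift) simp
  then have "x * (\<Sum>k<K. of_nat (K choose Suc k) * x^k) = 0"
    by (simp add: sum_distrib_left mult_ac)
  then have E: "(\<Sum>k<K. of_nat (K choose Suc k) * x^k) = 0" using x0 by simp
  obtain r where r: "K = Suc (Suc r)" using assms(2) by (metis Suc_diff_Suc less_trans_Suc nat.exhaust zero_less_Suc numeral_2_eq_2 not_less_eq)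
  define c where "c k = (K choose (k+2)) div K" for k
  have cK: "K choose (k+2) = K * c k" if "k < r" for k
  proof -
    have "K dvd (K choose (k+2))" using dvd_choose_prime[of "k+2" K] that r assms(1) by simp
    then show ?thesis unfolding c_def by simp
  qed
  define u where "u = (\<Sum>k<r. of_nat (c k) * x^k)"
  have "(\<Sum>k<K. of_nat (K choose Suc k) * x^k) = of_nat K + (\<Sum>k<r. of_nat (K choose Suc (Suc k)) * x^Suc k) + x^(K-1)"
  proof -
    have s: "{..<K} = {..<Suc (Suc r)}" using r by simp
    have "K choose Suc (Suc r) = 1" "K - 1 = Suc r" using r by simp_all
    then show ?thesis unfolding s by (subst sum.lessThan_Suc_shift, subst sum.lessThan_Suc) (simp del: binomial_Suc_Suc)
  qed
  also have "(\<Sum>k<r. of_nat (K choose Suc (Suc k)) * x^Suc k) = of_nat K * x * u"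
    unfolding u_def sum_distrib_left
    by (rule sum.cong) (auto simp: cK[simplified] mult_ac)
  finally have "of_nat K + of_nat K * x * u + x^(K-1) = 0" using E by simp
  then have key: "of_nat K = - (x^(K-1)) - of_nat K * x * u" by (simp add: eq_neg_iff_add_eq_0 algebra_simps)
  have uZ: "in_Zq q u" unfolding u_def x_def by (intro in_Zq_sum in_Zq_mult in_Zq_of_nat in_Zq_power in_Zq_x)
  have "s \<le> K - 1 \<Longrightarrow> \<exists>w. in_Zq q w \<and> of_nat K = x^s * w" for s
  proof (induction s)
    case 0 then show ?case using in_Zq_of_nat by fastforce
  next
    case (Suc s)
    then obtain w where w: "in_Zq q w" "of_nat K = x^s * w" by auto
    have "of_nat K = - (x^(K-1)) - x^s * w * x * u" using key w by simp
    also have "x^(K-1) = x^Suc s * x^(K - 1 - Suc s)" using Suc.prems by (metis power_add le_add_diff_inverse)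
    finally have "of_nat K = x^Suc s * (- (x^(K - 1 - Suc s)) - w * u)" by (simp add: algebra_simps)
    moreover have "in_Zq q (- (x^(K - 1 - Suc s)) - w * u)"
      unfolding x_def by (intro in_Zq_diff in_Zq_uminus in_Zq_power in_Zq_x in_Zq_mult w uZ)
    ultimately show ?case by blast
  qed
  then show ?thesis unfolding x_def q_def by blast
qed

lemma reindex: assumes "odd K" and even: "\<And>a. f (-a) = f a"
  shows "primed_sum K f = (\<Sum>j<K. f (2 * int j + 2 - int K))"
proof -
  define a where "a j = 2 * int j + 2 - int K" for j
  define B where "B = a ` {..<K}"
  have K0: "K > 0" using assms by (cases K) auto
  have sub1: "\<alpha> \<in> insert (- int K) B" if h: "\<alpha> \<in> {-int K..int K}" "odd \<alpha>" for \<alpha>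
  proof (cases "\<alpha> = - int K")
    case True then show ?thesis by simp
  next
    case ne: False
    obtain t where t: "\<alpha> = 2 * t + 1" using h(2) by (metis oddE)
    have "odd (int K)" using assms(1) by simp
    then obtain s where s: "int K = 2 * s + 1" by (metis oddE)
    define j where "j = nat (t + s)"
    have "j < K" "a j = \<alpha>" using h(1) ne t s unfolding j_def a_def by auto
    then show ?thesis unfolding B_def by auto
  qed
  have sub2: "b \<in> {\<alpha>\<in>{-int K..int K}. odd \<alpha>}" if "b \<in> insert (- int K) B" for b
    using that assms(1) unfolding B_def a_def by auto
  have set: "{\<alpha>\<in>{-int K..int K}. odd \<alpha>} = insert (- int K) B"
    using sub1 sub2 by blast
  have notin: "- int K \<notin> B" unfolding B_def a_def by auto
  have KB: "int K \<in> B" unfolding B_def a_def using K0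
    by (intro image_eqI[of _ _ "K - 1"]) auto
  have inj: "inj_on a {..<K}" unfolding a_def inj_on_def by auto
  have wB: "primed_weight K b = 1" if "b \<in> B - {int K}" for b
    using that unfolding B_def a_def primed_weight_def by auto
  have "primed_sum K f = primed_weight K (- int K) * f (- int K) + (\<Sum>b\<in>B. primed_weight K b * f b)"
    unfolding primed_sum_def set using notin by (simp add: B_def)
  also have "(\<Sum>b\<in>B. primed_weight K b * f b) = primed_weight K (int K) * f (int K) + (\<Sum>b\<in>B - {int K}. primed_weight K b * f b)"
    using KB by (simp add: B_def sum.remove)
  also have "(\<Sum>b\<in>B - {int K}. primed_weight K b * f b) = (\<Sum>b\<in>B - {int K}. f b)"
    using wB by simp
  also have "primed_weight K (- int K) * f (- int K) + (primed_weight K (int K) * f (int K) + (\<Sum>b\<in>B - {int K}. f b))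
     = f (int K) + (\<Sum>b\<in>B - {int K}. f b)"
    using even[of "int K"] by (simp add: primed_weight_def)
  also have "\<dots> = (\<Sum>b\<in>B. f b)" using KB by (simp add: B_def sum.remove)
  also have "\<dots> = (\<Sum>j<K. f (a j))" unfolding B_def using inj by (simp add: sum.reindex)
  finally show ?thesis unfolding a_def .
qed

lemma Tdiv: assumes "prime K" "2*k + 2*m < K - 1" "c \<ge> 0"
  shows "int K dvd (\<Sum>j<K. int (nat (c * (2 * int j + 2 - int K)^2) choose k) * (2 * int j + 2 - int K)^(2*m))"
proof -
  define A :: "int poly" where "A = [:2 - int K, 2:]"
  define P where "P = (\<Prod>i<k. smult c (A^2) - [:int i:]) * A^(2*m)"
  have polyA: "poly A (int j) = 2 * int j + 2 - int K" for j unfolding A_def by simp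
  have dA: "degree A \<le> 1" unfolding A_def by simp
  have dA2: "degree (A^2) \<le> 2" using degree_power_le[of A 2] dA by linarith
  have d1: "degree (smult c (A^2) - [:int i:]) \<le> 2" for i
    by (rule degree_diff_le, rule order_trans[OF degree_smult_le dA2]) simp
  have dprod: "degree (\<Prod>i<k. smult c (A^2) - [:int i:]) \<le> 2*k"
  proof -
    have "degree (\<Prod>i<k. smult c (A^2) - [:int i:]) \<le> (\<Sum>i<k. degree (smult c (A^2) - [:int i:]))"
      using degree_prod_sum_le[of "{..<k}" "\<lambda>i. smult c (A^2) - [:int i:]"] by (simp add: o_def)
    also have "\<dots> \<le> (\<Sum>i<k. 2)" by (rule sum_mono) (rule d1)
    finally show ?thesis by simp
  qed
  have dpow: "degree (A^(2*m)) \<le> 2*m"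
  proof -
    have "degree A * (2*m) \<le> 1 * (2*m)" using dA by (rule mult_le_mono1)
    then show ?thesis using degree_power_le[of A "2*m"] by linarith
  qed
  have "degree P \<le> 2*k + 2*m"
    unfolding P_def using degree_mult_le[of "\<Prod>i<k. smult c (A^2) - [:int i:]" "A^(2*m)"] dprod dpow by linarith
  then have dP: "degree P < K - 1" using assms(2) by simp
  have polyP: "poly P (int j) = fact k * (int (nat (c * (2 * int j + 2 - int K)^2) choose k) * (2 * int j + 2 - int K)^(2*m))" for j
  proof -
    have nn: "int (nat (c * (2 * int j + 2 - int K)^2)) = c * (2 * int j + 2 - int K)^2"
      using assms(3) by simp
    have "poly P (int j) = (\<Prod>i<k. c * (2 * int j + 2 - int K)^2 - int i) * (2 * int j + 2 - int K)^(2*m)"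
      unfolding P_def by (simp add: poly_prod polyA)
    also have "(\<Prod>i<k. c * (2 * int j + 2 - int K)^2 - int i) = fact k * int (nat (c * (2 * int j + 2 - int K)^2) choose k)"
      using fact_choose_int[of k "nat (c * (2 * int j + 2 - int K)^2)"] nn by simp
    finally show ?thesis by (simp add: mult.assoc)
  qed
  have "int K dvd (\<Sum>j<K. poly P (int j))" by (rule polysum[OF assms(1) dP])
  then have "int K dvd fact k * (\<Sum>j<K. int (nat (c * (2 * int j + 2 - int K)^2) choose k) * (2 * int j + 2 - int K)^(2*m))"
    unfolding polyP sum_distrib_left .
  moreover have "prime (int K)" using assms(1) by simp
  moreover have "\<not> int K dvd fact k"
  proof
    assume "int K dvd fact k"
    then have "K dvd fact k" by (metis of_nat_dvd_iff of_nat_fact)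
    then have "K \<le> k" using prime_dvd_fact_iff[OF assms(1)] by simp
    then show False using assms(2) by simp
  qed
  ultimately show ?thesis using prime_dvd_mult_iff by blast
qed

theorem lemma2p1:
  fixes K :: nat and p :: int and m :: nat
  assumes "prime K" and "odd K"
  shows "\<exists>w. in_Zq (qchk K) w \<and>
    primed_sum K (\<lambda>\<alpha>. qchk K powi (p * \<alpha>^2) * of_int \<alpha> ^ (2*m))
      = (qchk K - 1) ^ nat (max 0 ((int K - 1) div 2 - int m)) * w"
proof -
  define q where "q = qchk K"
  define x where "x = q - 1"
  have K2: "K > 2" using assms prime_ge_2_nat[OF assms(1)] by (cases "K = 2") auto
  obtain s where s: "K = 2 * s + 1" using assms(2) by (metis oddE)
  define n where "n = nat ((int K - 1) div 2 - int m)"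
  have nmax: "nat (max 0 ((int K - 1) div 2 - int m)) = n" unfolding n_def by simp
  have ns: "n = s - m" unfolding n_def s by simp
  define a where "a j = 2 * int j + 2 - int K" for j
  define c where "c = p mod int K"
  have c0: "c \<ge> 0" unfolding c_def using K2 by simp
  define N where "N j = nat (c * (a j)^2)" for j
  define f where "f = (\<lambda>\<alpha>::int. qchk K powi (p * \<alpha>^2) * (of_int \<alpha> :: complex) ^ (2*m))"
  have S: "primed_sum K f = (\<Sum>j<K. f (a j))"
    unfolding a_def by (rule reindex[OF assms(2)]) (simp add: f_def power_mult)
  have qK: "q ^ K = 1" unfolding q_def using qchk_pow K2 by simp
  have fa: "f (a j) = q ^ N j * of_int (a j)^(2*m)" for j
  proof -
    have "q powi (p * (a j)^2) = q ^ nat (c * (a j)^2)"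
      by (rule powi_cong[OF qK]) (use K2 c0 in \<open>auto simp: c_def mod_mult_left_eq\<close>)
    then show ?thesis unfolding f_def N_def q_def by simp
  qed
  obtain wf where wf: "\<And>M. in_Zq q (wf M)" "\<And>M. q ^ M = (\<Sum>k<n. of_nat (M choose k) * x^k) + x^n * wf M"
    using binom_trunc[of q _ n] unfolding x_def by metis
  define T where "T k = (\<Sum>j<K. int (N j choose k) * (a j)^(2*m))" for k
  have Td: "int K dvd T k" if "k < n" for k
    unfolding T_def N_def a_def
    by (rule Tdiv[OF assms(1) _ c0]) (use that ns s in simp)
  define t where "t k = T k div int K" for k
  have Tt: "T k = int K * t k" if "k < n" for k using Td[OF that] unfolding t_def by simp
  obtain W where W: "in_Zq q W" "of_nat K = x^(K-1) * W"
    using Kdiv[OF assms(1) K2] unfolding q_def x_def by blast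
  have "(\<Sum>j<K. f (a j)) = (\<Sum>j<K. ((\<Sum>k<n. of_nat (N j choose k) * x^k) + x^n * wf (N j)) * of_int (a j)^(2*m))"
    unfolding fa wf(2) ..
  also have "\<dots> = (\<Sum>j<K. \<Sum>k<n. x^k * (of_nat (N j choose k) * of_int (a j)^(2*m))) + x^n * (\<Sum>j<K. wf (N j) * of_int (a j)^(2*m))"
    unfolding sum_distrib_left[of "x^n"] sum.distrib[symmetric]
    by (rule sum.cong) (simp_all add: distrib_left distrib_right sum_distrib_left sum_distrib_right mult_ac)
  also have "(\<Sum>j<K. \<Sum>k<n. x^k * (of_nat (N j choose k) * of_int (a j)^(2*m))) = (\<Sum>k<n. x^k * of_int (T k))"
    unfolding T_def by (subst sum.swap) (simp add: sum_distrib_left)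
  also have "\<dots> = (\<Sum>k<n. x^n * (x^(k + (K - 1) - n) * W * of_int (t k)))"
  proof (rule sum.cong)
    fix k assume k: "k \<in> {..<n}"
    have "x^k * of_int (T k) = x^k * of_nat K * of_int (t k)" using Tt k by simp
    also have "\<dots> = x^(k + (K - 1)) * W * of_int (t k)" using W(2) by (simp add: power_add)
    also have "x^(k + (K - 1)) = x^n * x^(k + (K - 1) - n)" using ns s by (simp flip: power_add)
    finally show "x^k * of_int (T k) = x^n * (x^(k + (K - 1) - n) * W * of_int (t k))" by (simp add: mult_ac)
  qed simp
  finally have "primed_sum K f = x^n * ((\<Sum>k<n. x^(k + (K - 1) - n) * W * of_int (t k)) + (\<Sum>j<K. wf (N j) * of_int (a j)^(2*m)))"
    unfolding S by (simp add: sum_distrib_left distrib_left)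
  moreover have "in_Zq q ((\<Sum>k<n. x^(k + (K - 1) - n) * W * of_int (t k)) + (\<Sum>j<K. wf (N j) * of_int (a j)^(2*m)))"
    unfolding x_def by (intro in_Zq_add in_Zq_sum in_Zq_mult in_Zq_power in_Zq_x W(1) in_Zq_of_int wf(1))
  ultimately show ?thesis unfolding nmax f_def x_def q_def by blast
qed

end
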